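(* Let $\mu>\nu>0$ and let $(Y_i)_{i\ge0},(e_i)_{i\ge0}$ be sequences with values in $[0,1]$, with $e_0=1/2$, satisfying the decoy-state constraints (DS) for some reals $Q_\mu,Q_\nu,E_\mu,E_\nu$. Define $$Y_1^*=\frac{\mu^2Q_\nu e^{\nu}-\nu^2Q_\mu e^{\mu}}{\mu\nu(\mu-\nu)},\qquad e_1^*=\frac{\mu^2E_\nu Q_\nu e^{\nu}-\nu^2E_\mu Q_\mu e^{\mu}}{\mu^2Q_\nu e^{\nu}-\nu^2Q_\mu e^{\mu}},\qquad e_2^*Y_2^*:=\frac{2\big(\nu E_\mu Q_\mu e^{\mu}-\mu E_\nu Q_\nu e^{\nu}\big)}{\mu\nu(\mu-\nu)},$$ (these are the values of $Y_1,e_1$ and $e_2Y_2$ solving the four equations of (DS) when $Y_0=0$ and $Y_i=0$ for all $i\ge3$), assuming $\mu^2Q_\nu e^{\nu}\ne\nu^2Q_\mu e^{\mu}$. Assume $0<e_1^*\le 1/2$, and with $a=1+\log_2(1-e_1^* )$, $b=\log_2(1-e_1^* )-\log_2 e_1^*$ assume $(a-b)\frac{\nu}{\mu+\nu}+(b-2a)\ge0$. Then $$Y_1\big[1-h(e_1)\big]\ \ge\ Y_1^*\big[1-h(e_1^* )\big]+\frac{\nu}{2}\big(1+\log_2 e_1^*\big)\,e_2^*Y_2^* .$$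
   Context: $h(x)=-x\log_2 x-(1-x)\log_2(1-x)$ is the binary entropy function on $[0,1]$ (with $0\log_2 0=0$). For reals $\mu>\nu>0$, the decoy-state constraints (DS) on sequences $(Y_i)_{i\ge0},(e_i)_{i\ge0}$ with values in $[0,1]$ are $$Q_\mu=\sum_{i=0}^\infty \frac{\mu^i e^{-\mu}}{i!}Y_i,\quad Q_\nu=\sum_{i=0}^\infty \frac{\nu^i e^{-\nu}}{i!}Y_i,\quad E_\mu Q_\mu=\sum_{i=0}^\infty \frac{\mu^i e^{-\mu}}{i!}Y_ie_i,\quad E_\nu Q_\nu=\sum_{i=0}^\infty \frac{\nu^i e^{-\nu}}{i!}Y_ie_i.$$ *)

theory Defs
  imports Complex_Main
begin

definition bin_entropy :: "real \<Rightarrow> real" where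
  "bin_entropy x =
     (if x = 0 then 0 else - x * log 2 x) +
     (if 1 - x = 0 then 0 else - (1 - x) * log 2 (1 - x))"

end

theory Submission imports Defs begin

lemma gibbs_term:
  fixes y p :: real
  assumes "0 \<le> y" "0 < p"
  shows "y - p \<le> (if y = 0 then 0 else y * ln y) - y * ln p"
proof (cases "y = 0")
  case True then show ?thesis using assms by simp
next
  case False
  hence yp: "y > 0" using assms by simp
  have "ln (p / y) \<le> p / y - 1" using assms yp by (intro ln_le_minus_one) simp
  hence "ln p - ln y \<le> p / y - 1" using assms yp by (simp add: ln_div)
  hence "y * (ln p - ln y) \<le> y * (p / y - 1)" using yp by (intro mult_left_mono) auto
  hence "y * ln p - y * ln y \<le> p - y" using yp by (simp add: algebra_simps)
  thus ?thesis using False by simp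
qed

lemma gibbs:
  fixes x p :: real
  assumes "0 \<le> x" "x \<le> 1" "0 < p" "p < 1"
  shows "bin_entropy x \<le> - x * log 2 p - (1 - x) * log 2 (1 - p)"
proof -
  have l2: "ln 2 > (0::real)" by simp
  have t1: "x - p \<le> (if x = 0 then 0 else x * ln x) - x * ln p" using assms by (intro gibbs_term) auto
  have t2: "(1-x) - (1-p) \<le> (if 1 - x = 0 then 0 else (1-x) * ln (1-x)) - (1-x) * ln (1-p)"
    using assms by (intro gibbs_term) auto
  have "(if x = 0 then 0 else - x * ln x) + (if 1 - x = 0 then 0 else - (1 - x) * ln (1 - x))
        \<le> - x * ln p - (1 - x) * ln (1 - p)" using t1 t2 by (auto split: if_splits simp: algebra_simps)
  hence "((if x = 0 then 0 else - x * ln x) + (if 1 - x = 0 then 0 else - (1 - x) * ln (1 - x))) / ln 2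
        \<le> (- x * ln p - (1 - x) * ln (1 - p)) / ln 2" using l2 by (intro divide_right_mono) auto
  thus ?thesis unfolding bin_entropy_def log_def using l2 by (auto simp: field_simps mult_le_0_iff split: if_splits)
qed

lemma bin_entropy_int:
  fixes p :: real
  assumes "0 < p" "p < 1"
  shows "1 - bin_entropy p = (1 + log 2 (1 - p)) - (log 2 (1 - p) - log 2 p) * p"
  using assms unfolding bin_entropy_def by (simp add: algebra_simps)

lemma Xeq: "nu\<^sup>2 * mu ^ (k+2) - mu\<^sup>2 * nu ^ (k+2) = mu\<^sup>2 * nu\<^sup>2 * ((mu::real) ^ k - nu ^ k)"
  by (simp add: power2_eq_square right_diff_distrib mult_ac)

lemma Peq_aux: "-(a * (mu\<^sup>2 * n - nu\<^sup>2 * m) - b * (mu\<^sup>2 * n - nu\<^sup>2 * m) * ee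
       + nu * (a - b) * (nu * m - mu * n) * ee)
   = a * (nu\<^sup>2 * m - mu\<^sup>2 * n) * (1 - ee) + ee * (b - a) * (mu * n * (mu - nu))" for a b mu nu m n ee :: real
  by (simp add: power2_eq_square algebra_simps)

theorem theorem2:
  fixes mu nu Qmu Qnu Emu Enu :: real
    and Y e :: "nat \<Rightarrow> real"
  assumes munu: "mu > nu" "nu > 0"
    and Yrange: "\<And>i. 0 \<le> Y i \<and> Y i \<le> 1"
    and erange: "\<And>i. 0 \<le> e i \<and> e i \<le> 1"
    and e0: "e 0 = 1/2"
    and DS1: "(\<lambda>i. mu ^ i * exp (- mu) / fact i * Y i) sums Qmu"
    and DS2: "(\<lambda>i. nu ^ i * exp (- nu) / fact i * Y i) sums Qnu"
    and DS3: "(\<lambda>i. mu ^ i * exp (- mu) / fact i * Y i * e i) sums (Emu * Qmu)"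
    and DS4: "(\<lambda>i. nu ^ i * exp (- nu) / fact i * Y i * e i) sums (Enu * Qnu)"
    and nondeg: "mu\<^sup>2 * Qnu * exp nu \<noteq> nu\<^sup>2 * Qmu * exp mu"
    and e1s_pos: "0 < (mu\<^sup>2 * Enu * Qnu * exp nu - nu\<^sup>2 * Emu * Qmu * exp mu)
                      / (mu\<^sup>2 * Qnu * exp nu - nu\<^sup>2 * Qmu * exp mu)"
    and e1s_le: "(mu\<^sup>2 * Enu * Qnu * exp nu - nu\<^sup>2 * Emu * Qmu * exp mu)
                      / (mu\<^sup>2 * Qnu * exp nu - nu\<^sup>2 * Qmu * exp mu) \<le> 1/2"
    and cond: "let e1s = (mu\<^sup>2 * Enu * Qnu * exp nu - nu\<^sup>2 * Emu * Qmu * exp mu)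
                      / (mu\<^sup>2 * Qnu * exp nu - nu\<^sup>2 * Qmu * exp mu);
                   a = 1 + log 2 (1 - e1s);
                   b = log 2 (1 - e1s) - log 2 e1s
               in (a - b) * (nu / (mu + nu)) + (b - 2 * a) \<ge> 0"
  shows "let Y1s = (mu\<^sup>2 * Qnu * exp nu - nu\<^sup>2 * Qmu * exp mu) / (mu * nu * (mu - nu));
             e1s = (mu\<^sup>2 * Enu * Qnu * exp nu - nu\<^sup>2 * Emu * Qmu * exp mu)
                      / (mu\<^sup>2 * Qnu * exp nu - nu\<^sup>2 * Qmu * exp mu);
             e2Y2s = 2 * (nu * Emu * Qmu * exp mu - mu * Enu * Qnu * exp nu) / (mu * nu * (mu - nu))
         in Y 1 * (1 - bin_entropy (e 1))
            \<ge> Y1s * (1 - bin_entropy e1s) + nu / 2 * (1 + log 2 e1s) * e2Y2s"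
proof -
  define D where "D = mu\<^sup>2 * Qnu * exp nu - nu\<^sup>2 * Qmu * exp mu"
  define N where "N = mu\<^sup>2 * Enu * Qnu * exp nu - nu\<^sup>2 * Emu * Qmu * exp mu"
  define E where "E = N / D"
  define a where "a = 1 + log 2 (1 - E)"
  define b where "b = log 2 (1 - E) - log 2 E"
  define K where "K = mu * nu * (mu - nu)"
  define qm where "qm = Qmu * exp mu"
  define qn where "qn = Qnu * exp nu"
  define sm where "sm = Emu * Qmu * exp mu"
  define sn where "sn = Enu * Qnu * exp nu"
  have Dnz: "D \<noteq> 0" using nondeg unfolding D_def by simp
  have Kpos: "K > 0" using munu unfolding K_def by simp
  have Epos: "0 < E" and Ele: "E \<le> 1/2" using e1s_pos e1s_le unfolding E_def N_def D_def by auto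
  have cond': "(a - b) * (nu / (mu + nu)) + (b - 2 * a) \<ge> 0"
    using cond unfolding Let_def a_def b_def E_def N_def D_def by simp
  have apos: "a \<ge> 0"
  proof -
    have "log 2 (2 * (1 - E)) = log 2 2 + log 2 (1 - E)" using Ele by (intro log_mult_pos) auto
    moreover have "log 2 (2 * (1 - E)) \<ge> 0" using Ele by simp
    ultimately show ?thesis unfolding a_def by simp
  qed
  have ab: "a - b = 1 + log 2 E" unfolding a_def b_def by simp
  have abneg: "a - b \<le> 0"
  proof -
    have "log 2 (2 * E) = log 2 2 + log 2 E" using Epos by (intro log_mult_pos) auto
    moreover have "log 2 (2 * E) \<le> 0" using Ele Epos by simp
    ultimately show ?thesis unfolding ab by simp
  qed
  have c0: "b * mu - 2 * a * mu - a * nu \<ge> 0"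
  proof -
    have "0 \<le> ((a - b) * (nu / (mu + nu)) + (b - 2 * a)) * (mu + nu)"
      using cond' munu by simp
    also have "\<dots> = b * mu - 2 * a * mu - a * nu" using munu by (simp add: field_simps)
    finally show ?thesis .
  qed
  have S1: "(\<lambda>i. mu ^ i / fact i * Y i) sums qm"
  proof -
    have "(\<lambda>i. mu ^ i * exp (- mu) / fact i * Y i * exp mu) sums (Qmu * exp mu)"
      using DS1 by (rule sums_mult2)
    moreover have "(\<lambda>i. mu ^ i * exp (- mu) / fact i * Y i * exp mu) = (\<lambda>i. mu ^ i / fact i * Y i)"
      by (rule ext) (simp add: exp_minus field_simps)
    ultimately show ?thesis unfolding qm_def by simp
  qed
  have S2: "(\<lambda>i. nu ^ i / fact i * Y i) sums qn"
  proof -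
    have "(\<lambda>i. nu ^ i * exp (- nu) / fact i * Y i * exp nu) sums (Qnu * exp nu)"
      using DS2 by (rule sums_mult2)
    moreover have "(\<lambda>i. nu ^ i * exp (- nu) / fact i * Y i * exp nu) = (\<lambda>i. nu ^ i / fact i * Y i)"
      by (rule ext) (simp add: exp_minus field_simps)
    ultimately show ?thesis unfolding qn_def by simp
  qed
  have S3: "(\<lambda>i. mu ^ i / fact i * Y i * e i) sums sm"
  proof -
    have "(\<lambda>i. mu ^ i * exp (- mu) / fact i * Y i * e i * exp mu) sums (Emu * Qmu * exp mu)"
      using DS3 by (rule sums_mult2)
    moreover have "(\<lambda>i. mu ^ i * exp (- mu) / fact i * Y i * e i * exp mu) = (\<lambda>i. mu ^ i / fact i * Y i * e i)"
      by (rule ext) (simp add: exp_minus field_simps)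
    ultimately show ?thesis unfolding sm_def by simp
  qed
  have S4: "(\<lambda>i. nu ^ i / fact i * Y i * e i) sums sn"
  proof -
    have "(\<lambda>i. nu ^ i * exp (- nu) / fact i * Y i * e i * exp nu) sums (Enu * Qnu * exp nu)"
      using DS4 by (rule sums_mult2)
    moreover have "(\<lambda>i. nu ^ i * exp (- nu) / fact i * Y i * e i * exp nu) = (\<lambda>i. nu ^ i / fact i * Y i * e i)"
      by (rule ext) (simp add: exp_minus field_simps)
    ultimately show ?thesis unfolding sn_def by simp
  qed
  define c1 where "c1 = - a * mu\<^sup>2 / K"
  define c2 where "c2 = a * nu\<^sup>2 / K"
  define c3 where "c3 = (b * mu\<^sup>2 + nu * (a - b) * mu) / K"
  define c4 where "c4 = (- b * nu\<^sup>2 - nu * (a - b) * nu) / K"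
  define w where "w i = c1 * (nu ^ i / fact i * Y i) + c2 * (mu ^ i / fact i * Y i)
     + c3 * (nu ^ i / fact i * Y i * e i) + c4 * (mu ^ i / fact i * Y i * e i)" for i
  define P where "P i = -(a * (mu\<^sup>2 * nu ^ i - nu\<^sup>2 * mu ^ i) - b * (mu\<^sup>2 * nu ^ i - nu\<^sup>2 * mu ^ i) * e i
       + nu * (a - b) * (nu * mu ^ i - mu * nu ^ i) * e i)" for i
  have wP: "w i = Y i / fact i * P i / K" for i
    unfolding w_def P_def c1_def c2_def c3_def c4_def using Kpos
    by (simp add: field_simps power2_eq_square)
  have Sw: "w sums (c1 * qn + c2 * qm + c3 * sn + c4 * sm)"
    unfolding w_def
    by (intro sums_add sums_mult S1 S2 S3 S4)
  have Pnn: "P i \<ge> 0" if "i \<noteq> 1" for i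
  proof (cases "i = 0")
    case True
    have "P i = (mu - nu) / 2 * (b * mu - 2 * a * mu - a * nu)"
      unfolding P_def True using e0 by (simp add: field_simps power2_eq_square)
    moreover have "(mu - nu) / 2 * (b * mu - 2 * a * mu - a * nu) \<ge> 0"
      using c0 munu by (intro mult_nonneg_nonneg) auto
    ultimately show ?thesis by simp
  next
    case False
    with that obtain k where k: "i = k + 2" by (metis add_2_eq_Suc' not0_implies_Suc One_nat_def)
    define X where "X = nu\<^sup>2 * mu ^ i - mu\<^sup>2 * nu ^ i"
    have "nu ^ k \<le> mu ^ k" using munu by (intro power_mono) auto
    moreover have "X = mu\<^sup>2 * nu\<^sup>2 * (mu ^ k - nu ^ k)"
      unfolding X_def k by (rule Xeq)
    ultimately have Xnn: "X \<ge> 0" by simp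
    have Peq: "P i = a * X * (1 - e i) + e i * (b - a) * (mu * nu ^ i * (mu - nu))"
      unfolding P_def X_def by (rule Peq_aux)
    have "a * X * (1 - e i) \<ge> 0" using apos Xnn erange[of i] by simp
    moreover have "e i * (b - a) * (mu * nu ^ i * (mu - nu)) \<ge> 0"
      using erange[of i] abneg munu by simp
    ultimately show ?thesis using Peq by linarith
  qed
  have wnn: "w i \<ge> 0" if "i \<noteq> 1" for i
  proof -
    have y: "Y i / fact i \<ge> 0" using Yrange[of i] by simp
    have "Y i / fact i * P i \<ge> 0" using y Pnn[OF that] by (rule mult_nonneg_nonneg)
    thus ?thesis unfolding wP using Kpos by (intro divide_nonneg_pos) auto
  qed
  have w1: "w 1 = - Y 1 * (a - b * e 1)"
    unfolding wP P_def K_def using munu by (simp add: field_simps power2_eq_square)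
  have S0: "(\<lambda>i. if i = 1 then w 1 else 0) sums w 1" by (rule sums_single)
  have lowS: "w 1 \<le> c1 * qn + c2 * qm + c3 * sn + c4 * sm"
  proof (rule sums_le[OF _ S0 Sw])
    fix n show "(if n = 1 then w 1 else 0) \<le> w n" using wnn[of n] by (cases "n = 1") auto
  qed
  have E1: "E < 1" using Ele by simp
  have G: "1 - bin_entropy (e 1) \<ge> a - b * e 1"
    using gibbs[of "e 1" E] erange[of 1] Epos E1 unfolding a_def b_def by (simp add: algebra_simps)
  have LHS: "Y 1 * (1 - bin_entropy (e 1)) \<ge> Y 1 * (a - b * e 1)"
    using G Yrange[of 1] by (intro mult_left_mono) auto
  have I: "1 - bin_entropy E = a - b * E"
    using bin_entropy_int[OF Epos E1] unfolding a_def b_def by simp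
  have alg: "D / K * (a - b * E) + nu / 2 * (a - b) * (2 * (nu * sm - mu * sn) / K)
      = - (c1 * qn + c2 * qm + c3 * sn + c4 * sm)"
    unfolding E_def c1_def c2_def c3_def c4_def D_def N_def qm_def qn_def sm_def sn_def
    using Dnz[unfolded D_def] Kpos by (simp add: field_simps)
  have fin: "Y 1 * (1 - bin_entropy (e 1)) \<ge> D / K * (1 - bin_entropy E) + nu / 2 * (1 + log 2 E) * (2 * (nu * sm - mu * sn) / K)"
    unfolding I ab[symmetric] alg using LHS lowS w1 by linarith
  show ?thesis
    using fin unfolding Let_def D_def N_def E_def K_def sm_def sn_def by (simp only: mult.assoc)
qed

end
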